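(* Let $\mathfrak{g}_1,\dots,\mathfrak{g}_t$ be nilpotent Lie algebras. Then (1) $\mathfrak{g}_1\underline{\times}\mathfrak{g}_2\cong\mathfrak{g}_2\underline{\times}\mathfrak{g}_1$; and (2) $(\mathfrak{g}_1\underline{\times}\mathfrak{g}_2\underline{\times}\cdots\underline{\times}\mathfrak{g}_{t-1})\underline{\times}\mathfrak{g}_t\cong\mathfrak{g}_1\underline{\times}(\mathfrak{g}_2\underline{\times}\mathfrak{g}_3\underline{\times}\cdots\underline{\times}\mathfrak{g}_t)$, where an unparenthesized iterated product is formed from left to right, $\mathfrak{h}_1\underline{\times}\cdots\underline{\times}\mathfrak{h}_k=(\mathfrak{h}_1\underline{\times}\cdots\underline{\times}\mathfrak{h}_{k-1})\underline{\times}\mathfrak{h}_k$.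
   Context: All Lie algebras are finite-dimensional, complex, nilpotent and nonabelian; $C^1\mathfrak{g}=[\mathfrak{g},\mathfrak{g}]$. Product by generators: for $\mathfrak{g}_1,\mathfrak{g}_2$ of dimensions $m_1,m_2$ take bases $\{X_1,\dots,X_{m_1}\}$, $\{X'_1,\dots,X'_{m_2}\}$ such that $X_1,\dots,X_{n_1}$ generate $\mathfrak{g}_1$ and $X_{n_1+1},\dots,X_{m_1}$ span $C^1\mathfrak{g}_1$, and similarly for $\mathfrak{g}_2$ with $n_2$ generators. Then $\mathfrak{g}_1\underline{\times}\mathfrak{g}_2$ is the Lie algebra on $\mathfrak{g}_1\oplus\mathfrak{g}_2\oplus\langle Z_1,\dots,Z_{n_1n_2}\rangle$ with the brackets of $\mathfrak{g}_1$ and of $\mathfrak{g}_2$, $[X_i,X'_j]=Z_{(i-1)n_2+j}$ for $1\le i\le n_1$, $1\le j\le n_2$, $[X_i,X'_j]=0$ if $i>n_1$ or $j>n_2$, and the $Z_k$ central. In $\mathfrak{g}_1\underline{\times}\mathfrak{g}_2$ the generators $X_1,\dots,X_{n_1},X'_1,\dots,X'_{n_2}$ are used, the remaining basis vectors (including the $Z_k$) spanning its derived algebra. *)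

theory Defs
  imports Complex_Main "HOL-Library.Function_Algebras"
begin

text \<open>A finite-dimensional complex Lie algebra presented by an ordered basis
  e_0, ..., e_(dim-1) and structure constants: lsc i j k is the coefficient of
  e_k in [e_i, e_j].  The field lgen records the number n of generators of the
  adapted basis: e_0..e_(n-1) generate, e_n..e_(dim-1) span the derived algebra.\<close>

record liealg =
  ldim :: nat
  lgen :: nat
  lsc  :: "nat \<Rightarrow> nat \<Rightarrow> nat \<Rightarrow> complex"

definition lvecs :: "liealg \<Rightarrow> (nat \<Rightarrow> complex) set" where
  "lvecs L = {x. \<forall>k. ldim L \<le> k \<longrightarrow> x k = 0}"

definition lbasis :: "nat \<Rightarrow> nat \<Rightarrow> complex" where
  "lbasis i = (\<lambda>k. if k = i then 1 else 0)"

definition lbr :: "liealg \<Rightarrow> (nat \<Rightarrow> complex) \<Rightarrow> (nat \<Rightarrow> complex) \<Rightarrow> nat \<Rightarrow> complex" where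
  "lbr L x y = (\<lambda>k. if k < ldim L then
      (\<Sum>i<ldim L. \<Sum>j<ldim L. x i * y j * lsc L i j k) else 0)"

definition cscale :: "complex \<Rightarrow> (nat \<Rightarrow> complex) \<Rightarrow> nat \<Rightarrow> complex" where
  "cscale c x = (\<lambda>k. c * x k)"

definition cspan :: "(nat \<Rightarrow> complex) set \<Rightarrow> (nat \<Rightarrow> complex) set" where
  "cspan S = {v. \<exists>F a. finite F \<and> F \<subseteq> S \<and> v = (\<Sum>u\<in>F. cscale (a u) u)}"

fun lcs :: "liealg \<Rightarrow> nat \<Rightarrow> (nat \<Rightarrow> complex) set" where
  "lcs L 0 = lvecs L"
| "lcs L (Suc i) = cspan {lbr L x y | x y. x \<in> lvecs L \<and> y \<in> lcs L i}"

definition is_lie_algebra :: "liealg \<Rightarrow> bool" where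
  "is_lie_algebra L \<longleftrightarrow>
     (\<forall>i j k. ldim L \<le> i \<or> ldim L \<le> j \<or> ldim L \<le> k \<longrightarrow> lsc L i j k = 0)
   \<and> (\<forall>x\<in>lvecs L. lbr L x x = 0)
   \<and> (\<forall>x\<in>lvecs L. \<forall>y\<in>lvecs L. \<forall>z\<in>lvecs L.
        lbr L x (lbr L y z) + lbr L y (lbr L z x) + lbr L z (lbr L x y) = 0)"

definition lie_nilpotent :: "liealg \<Rightarrow> bool" where
  "lie_nilpotent L \<longleftrightarrow> (\<exists>k. lcs L k = {0})"

definition lie_nonabelian :: "liealg \<Rightarrow> bool" where
  "lie_nonabelian L \<longleftrightarrow> (\<exists>x\<in>lvecs L. \<exists>y\<in>lvecs L. lbr L x y \<noteq> 0)"

definition adapted_basis :: "liealg \<Rightarrow> bool" where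
  "adapted_basis L \<longleftrightarrow> lgen L \<le> ldim L \<and>
     cspan {lbasis k | k. lgen L \<le> k \<and> k < ldim L} = lcs L 1"

definition good_nilpotent :: "liealg \<Rightarrow> bool" where
  "good_nilpotent L \<longleftrightarrow> is_lie_algebra L \<and> lie_nilpotent L \<and> lie_nonabelian L
     \<and> adapted_basis L"

definition lie_iso :: "liealg \<Rightarrow> liealg \<Rightarrow> bool" where
  "lie_iso L1 L2 \<longleftrightarrow> (\<exists>f. bij_betw f (lvecs L1) (lvecs L2)
     \<and> (\<forall>x\<in>lvecs L1. \<forall>y\<in>lvecs L1. f (x + y) = f x + f y)
     \<and> (\<forall>c. \<forall>x\<in>lvecs L1. f (cscale c x) = cscale c (f x))
     \<and> (\<forall>x\<in>lvecs L1. \<forall>y\<in>lvecs L1. f (lbr L1 x y) = lbr L2 (f x) (f y)))"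

text \<open>Basis of the product by generators g1 x g2, ordered as
  X_1..X_n1, X'_1..X'_n2, X_(n1+1)..X_m1, X'_(n2+1)..X'_m2, Z_1..Z_(n1 n2).\<close>
datatype pidx = P1 nat | P2 nat | PZ nat nat | PNone

definition pdecode :: "liealg \<Rightarrow> liealg \<Rightarrow> nat \<Rightarrow> pidx" where
  "pdecode L1 L2 p = (let m1 = ldim L1; n1 = lgen L1; m2 = ldim L2; n2 = lgen L2 in
     if p < n1 then P1 p
     else if p < n1 + n2 then P2 (p - n1)
     else if p < m1 + n2 then P1 (p - n2)
     else if p < m1 + m2 then P2 (p - m1)
     else if p < m1 + m2 + n1 * n2 then PZ ((p - m1 - m2) div n2) ((p - m1 - m2) mod n2)
     else PNone)"

definition gprod :: "liealg \<Rightarrow> liealg \<Rightarrow> liealg" where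
  "gprod L1 L2 = \<lparr> ldim = ldim L1 + ldim L2 + lgen L1 * lgen L2,
     lgen = lgen L1 + lgen L2,
     lsc = (\<lambda>p q r. case (pdecode L1 L2 p, pdecode L1 L2 q, pdecode L1 L2 r) of
         (P1 i, P1 j, P1 k) \<Rightarrow> lsc L1 i j k
       | (P2 i, P2 j, P2 k) \<Rightarrow> lsc L2 i j k
       | (P1 i, P2 j, PZ a b) \<Rightarrow>
           (if i < lgen L1 \<and> j < lgen L2 \<and> a = i \<and> b = j then 1 else 0)
       | (P2 j, P1 i, PZ a b) \<Rightarrow>
           (if i < lgen L1 \<and> j < lgen L2 \<and> a = i \<and> b = j then -1 else 0)
       | _ \<Rightarrow> 0) \<rparr>"

definition iprod :: "liealg list \<Rightarrow> liealg" where
  "iprod Ls = foldl gprod (hd Ls) (tl Ls)"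

end

theory Submission
  imports Defs
begin

definition wfL :: "liealg \<Rightarrow> bool" where "wfL L \<longleftrightarrow> lgen L \<le> ldim L"

fun pvalid :: "liealg \<Rightarrow> liealg \<Rightarrow> pidx \<Rightarrow> bool" where
  "pvalid L1 L2 (P1 i) = (i < ldim L1)"
| "pvalid L1 L2 (P2 j) = (j < ldim L2)"
| "pvalid L1 L2 (PZ a b) = (a < lgen L1 \<and> b < lgen L2)"
| "pvalid L1 L2 PNone = False"

fun penc :: "liealg \<Rightarrow> liealg \<Rightarrow> pidx \<Rightarrow> nat" where
  "penc L1 L2 (P1 i) = (if i < lgen L1 then i else i + lgen L2)"
| "penc L1 L2 (P2 j) = (if j < lgen L2 then lgen L1 + j else ldim L1 + j)"
| "penc L1 L2 (PZ a b) = ldim L1 + ldim L2 + a * lgen L2 + b"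
| "penc L1 L2 PNone = ldim L1 + ldim L2 + lgen L1 * lgen L2"

fun pisgen :: "liealg \<Rightarrow> liealg \<Rightarrow> pidx \<Rightarrow> bool" where
  "pisgen L1 L2 (P1 i) = (i < lgen L1)"
| "pisgen L1 L2 (P2 j) = (j < lgen L2)"
| "pisgen L1 L2 _ = False"

definition pc :: "liealg \<Rightarrow> liealg \<Rightarrow> pidx \<Rightarrow> pidx \<Rightarrow> pidx \<Rightarrow> complex" where
  "pc L1 L2 x y z = (case (x, y, z) of
         (P1 i, P1 j, P1 k) \<Rightarrow> lsc L1 i j k
       | (P2 i, P2 j, P2 k) \<Rightarrow> lsc L2 i j k
       | (P1 i, P2 j, PZ a b) \<Rightarrow>
           (if i < lgen L1 \<and> j < lgen L2 \<and> a = i \<and> b = j then 1 else 0)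
       | (P2 j, P1 i, PZ a b) \<Rightarrow>
           (if i < lgen L1 \<and> j < lgen L2 \<and> a = i \<and> b = j then -1 else 0)
       | _ \<Rightarrow> 0)"

lemma ldim_gprod[simp]: "ldim (gprod L1 L2) = ldim L1 + ldim L2 + lgen L1 * lgen L2"
  by (simp add: gprod_def)
lemma lgen_gprod[simp]: "lgen (gprod L1 L2) = lgen L1 + lgen L2"
  by (simp add: gprod_def)
lemma lsc_gprod: "lsc (gprod L1 L2) p q r = pc L1 L2 (pdecode L1 L2 p) (pdecode L1 L2 q) (pdecode L1 L2 r)"
  by (simp add: gprod_def pc_def)

lemma wfL_gprod: "wfL L1 \<Longrightarrow> wfL L2 \<Longrightarrow> wfL (gprod L1 L2)"
  by (simp add: wfL_def)

lemma zrange: "a < (n1::nat) \<Longrightarrow> b < n2 \<Longrightarrow> a * n2 + b < n1 * n2"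
proof -
  assume "a < n1" "b < n2"
  hence "Suc a * n2 \<le> n1 * n2" by (intro mult_le_mono1) simp
  thus ?thesis using \<open>b < n2\<close> by simp
qed

lemma dec_enc:
  assumes "wfL L1" "wfL L2" "pvalid L1 L2 l"
  shows "pdecode L1 L2 (penc L1 L2 l) = l"
  using assms
proof (cases l)
  case (PZ a b)
  with assms have ab: "a < lgen L1" "b < lgen L2" by auto
  have "a * lgen L2 + b < lgen L1 * lgen L2" using zrange[OF ab] .
  with ab PZ assms show ?thesis by (auto simp: pdecode_def Let_def wfL_def)
qed (auto simp: pdecode_def Let_def wfL_def)

lemma enc_lt:
  assumes "wfL L1" "wfL L2" "pvalid L1 L2 l"
  shows "penc L1 L2 l < ldim (gprod L1 L2)"
  using assms
proof (cases l)
  case (PZ a b)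
  with assms have ab: "a < lgen L1" "b < lgen L2" by auto
  have "a * lgen L2 + b < lgen L1 * lgen L2" using zrange[OF ab] .
  with ab PZ assms show ?thesis by (auto simp: wfL_def)
qed (auto simp: wfL_def)

lemma dec_valid:
  assumes "wfL L1" "wfL L2" "p < ldim (gprod L1 L2)"
  shows "pvalid L1 L2 (pdecode L1 L2 p) \<and> penc L1 L2 (pdecode L1 L2 p) = p"
proof -
  consider "p < ldim L1 + ldim L2" | "\<not> p < ldim L1 + ldim L2" by blast
  thus ?thesis
  proof cases
    case 1 thus ?thesis using assms by (auto simp: pdecode_def Let_def wfL_def)
  next
    case 2
    define x where "x = p - ldim L1 - ldim L2"
    have x: "x < lgen L1 * lgen L2" using assms 2 by (simp add: x_def)
    hence pos: "lgen L2 > 0" by (cases "lgen L2") auto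
    have "x div lgen L2 < lgen L1" using x by (simp add: less_mult_imp_div_less)
    moreover have "x mod lgen L2 < lgen L2" using pos by simp
    moreover have "p = ldim L1 + ldim L2 + x div lgen L2 * lgen L2 + x mod lgen L2"
      using 2 by (simp add: x_def)
    ultimately show ?thesis using 2 assms x
      by (auto simp: pdecode_def Let_def wfL_def x_def[symmetric])
  qed
qed

lemma enc_gen:
  assumes "wfL L1" "wfL L2" "pvalid L1 L2 l"
  shows "penc L1 L2 l < lgen L1 + lgen L2 \<longleftrightarrow> pisgen L1 L2 l"
  using assms by (cases l) (auto simp: wfL_def)

lemma lsc_enc:
  assumes "wfL L1" "wfL L2" "pvalid L1 L2 a" "pvalid L1 L2 b" "pvalid L1 L2 c"
  shows "lsc (gprod L1 L2) (penc L1 L2 a) (penc L1 L2 b) (penc L1 L2 c) = pc L1 L2 a b c"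
  using assms by (simp add: lsc_gprod dec_enc)

lemma enc_bij:
  assumes "wfL L1" "wfL L2"
  shows "bij_betw (penc L1 L2) {l. pvalid L1 L2 l} {..<ldim (gprod L1 L2)}"
  apply (rule bij_betw_byWitness[where f'="pdecode L1 L2"])
  using assms dec_enc dec_valid enc_lt by auto


definition biso :: "liealg \<Rightarrow> liealg \<Rightarrow> bool" where
  "biso L L' \<longleftrightarrow> ldim L = ldim L' \<and> lgen L = lgen L' \<and>
    (\<exists>\<pi> s. inj_on \<pi> {..<ldim L} \<and>
       (\<forall>i<ldim L. \<pi> i < ldim L \<and> (\<pi> i < lgen L \<longleftrightarrow> i < lgen L) \<and> s i \<noteq> (0::complex)) \<and>
       (\<forall>i<ldim L. \<forall>j<ldim L. \<forall>k<ldim L.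
           s i * s j * lsc L' (\<pi> i) (\<pi> j) (\<pi> k) = s k * lsc L i j k))"

lemma biso_refl: "biso L L"
  unfolding biso_def by (rule conjI, simp, rule conjI, simp, rule exI[of _ id], rule exI[of _ "\<lambda>_. 1"]) auto

lemma biso_trans:
  assumes "biso L1 L2" "biso L2 L3" shows "biso L1 L3"
proof -
  from assms(1) obtain p s where d: "ldim L1 = ldim L2" "lgen L1 = lgen L2"
    and p: "inj_on p {..<ldim L1}"
    "\<forall>i<ldim L1. p i < ldim L1 \<and> (p i < lgen L1 \<longleftrightarrow> i < lgen L1) \<and> s i \<noteq> 0"
    "\<forall>i<ldim L1. \<forall>j<ldim L1. \<forall>k<ldim L1. s i * s j * lsc L2 (p i) (p j) (p k) = s k * lsc L1 i j k"
    unfolding biso_def by blast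
  from assms(2) obtain q t where d2: "ldim L2 = ldim L3" "lgen L2 = lgen L3"
    and q: "inj_on q {..<ldim L2}"
    "\<forall>i<ldim L2. q i < ldim L2 \<and> (q i < lgen L2 \<longleftrightarrow> i < lgen L2) \<and> t i \<noteq> 0"
    "\<forall>i<ldim L2. \<forall>j<ldim L2. \<forall>k<ldim L2. t i * t j * lsc L3 (q i) (q j) (q k) = t k * lsc L2 i j k"
    unfolding biso_def by blast
  have inj: "inj_on (q \<circ> p) {..<ldim L1}"
    using p(1) q(1) p(2) d by (intro comp_inj_on) (auto intro: inj_on_subset)
  show ?thesis unfolding biso_def
  proof (intro conjI exI[of _ "q \<circ> p"] exI[of _ "\<lambda>i. s i * t (p i)"])
    show "\<forall>i<ldim L1. \<forall>j<ldim L1. \<forall>k<ldim L1. s i * t (p i) * (s j * t (p j)) * lsc L3 ((q \<circ> p) i) ((q \<circ> p) j) ((q \<circ> p) k) =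
         s k * t (p k) * lsc L1 i j k"
    proof (intro allI impI)
      fix i j k assume ijk: "i < ldim L1" "j < ldim L1" "k < ldim L1"
      have "s i * t (p i) * (s j * t (p j)) * lsc L3 ((q \<circ> p) i) ((q \<circ> p) j) ((q \<circ> p) k)
          = s i * s j * (t (p i) * t (p j) * lsc L3 (q (p i)) (q (p j)) (q (p k)))" by simp
      also have "\<dots> = s i * s j * (t (p k) * lsc L2 (p i) (p j) (p k))"
        using q(3) p(2) ijk d by simp
      also have "\<dots> = t (p k) * (s i * s j * lsc L2 (p i) (p j) (p k))" by simp
      also have "\<dots> = t (p k) * (s k * lsc L1 i j k)" using p(3) ijk by simp
      finally show "s i * t (p i) * (s j * t (p j)) * lsc L3 ((q \<circ> p) i) ((q \<circ> p) j) ((q \<circ> p) k) =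
         s k * t (p k) * lsc L1 i j k" by simp
    qed
  qed (use d d2 inj p(2) q(2) in auto)
qed


lemma biso_iso:
  assumes "biso L L'" shows "lie_iso L L'"
proof -
  from assms obtain p s where d: "ldim L = ldim L'" "lgen L = lgen L'"
    and p: "inj_on p {..<ldim L}"
    "\<forall>i<ldim L. p i < ldim L \<and> (p i < lgen L \<longleftrightarrow> i < lgen L) \<and> s i \<noteq> 0"
    and eq: "\<forall>i<ldim L. \<forall>j<ldim L. \<forall>k<ldim L. s i * s j * lsc L' (p i) (p j) (p k) = s k * lsc L i j k"
    unfolding biso_def by blast
  define n where "n = ldim L"
  have img: "p ` {..<n} = {..<n}"
    using p n_def by (intro endo_inj_surj) auto
  have bij: "bij_betw p {..<n} {..<n}" using img p(1) n_def by (simp add: bij_betw_def)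
  define h where "h = the_inv_into {..<n} p"
  have hb: "bij_betw h {..<n} {..<n}" unfolding h_def using bij by (rule bij_betw_the_inv_into)
  have ph: "k < n \<Longrightarrow> p (h k) = k" for k
    unfolding h_def using img p(1) n_def by (metis f_the_inv_into_f lessThan_iff)
  have hp: "i < n \<Longrightarrow> h (p i) = i" for i
    unfolding h_def using p(1) n_def by (simp add: the_inv_into_f_f)
  have hlt: "k < n \<Longrightarrow> h k < n" for k using hb by (auto dest: bij_betw_apply)
  have plt: "i < n \<Longrightarrow> p i < n" for i using p n_def by auto
  have snz: "i < n \<Longrightarrow> s i \<noteq> 0" for i using p n_def by auto
  have ri: "(\<Sum>i<n. G (p i)) = (\<Sum>i<n. G i)" for G :: "nat \<Rightarrow> complex"
    using sum.reindex_bij_betw[OF bij, of G] .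
  define f where "f x = (\<lambda>k. if k < n then s (h k) * x (h k) else 0)" for x :: "nat \<Rightarrow> complex"
  define g where "g y = (\<lambda>i. if i < n then y (p i) / s i else 0)" for y :: "nat \<Rightarrow> complex"
  have lv: "lvecs L = {x. \<forall>k. n \<le> k \<longrightarrow> x k = 0}" "lvecs L' = {x. \<forall>k. n \<le> k \<longrightarrow> x k = 0}"
    using d by (auto simp: lvecs_def n_def)
  have fbij: "bij_betw f (lvecs L) (lvecs L')"
  proof (rule bij_betw_byWitness[where f'=g])
    show "\<forall>a\<in>lvecs L. g (f a) = a"
      using snz hp plt unfolding lv f_def g_def by (auto simp: fun_eq_iff)
    show "\<forall>a'\<in>lvecs L'. f (g a') = a'"
      using snz ph hlt unfolding lv f_def g_def by (auto simp: fun_eq_iff)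
    show "f ` lvecs L \<subseteq> lvecs L'" unfolding lv f_def by auto
    show "g ` lvecs L' \<subseteq> lvecs L" unfolding lv g_def by auto
  qed
  have br: "f (lbr L x y) = lbr L' (f x) (f y)" if x: "x \<in> lvecs L" and y: "y \<in> lvecs L" for x y
  proof
    fix k
    show "f (lbr L x y) k = lbr L' (f x) (f y) k"
    proof (cases "k < n")
      case False thus ?thesis using d by (simp add: f_def lbr_def n_def)
    next
      case True
      have "lbr L' (f x) (f y) k = (\<Sum>i<n. \<Sum>j<n. f x i * f y j * lsc L' i j k)"
        using True d by (simp add: lbr_def n_def)
      also have "\<dots> = (\<Sum>i<n. \<Sum>j<n. f x (p i) * f y (p j) * lsc L' (p i) (p j) k)"
        using ri[of "\<lambda>i. \<Sum>j<n. f x i * f y (p j) * lsc L' i (p j) k"]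
          ri[of "\<lambda>j. f x _ * f y j * lsc L' _ j k"] by simp
      also have "\<dots> = (\<Sum>i<n. \<Sum>j<n. x i * y j * (s i * s j * lsc L' (p i) (p j) (p (h k))))"
        using plt hp ph True by (intro sum.cong refl) (simp add: f_def mult_ac)
      also have "\<dots> = (\<Sum>i<n. \<Sum>j<n. x i * y j * (s (h k) * lsc L i j (h k)))"
        using eq hlt True n_def by (intro sum.cong refl) simp
      also have "\<dots> = s (h k) * (\<Sum>i<n. \<Sum>j<n. x i * y j * lsc L i j (h k))"
        by (simp add: sum_distrib_left mult_ac)
      also have "\<dots> = f (lbr L x y) k"
        using True hlt by (simp add: f_def lbr_def n_def)
      finally show ?thesis by simp
    qed
  qed
  show ?thesis unfolding lie_iso_def
  proof (intro exI[of _ f] conjI ballI allI)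
    show "bij_betw f (lvecs L) (lvecs L')" by (rule fbij)
  next
    fix x y assume "x \<in> lvecs L" "y \<in> lvecs L"
    thus "f (x + y) = f x + f y" by (auto simp: f_def fun_eq_iff distrib_left)
  next
    fix c x assume "x \<in> lvecs L"
    thus "f (cscale c x) = cscale c (f x)" by (auto simp: f_def fun_eq_iff cscale_def)
  next
    fix x y assume "x \<in> lvecs L" "y \<in> lvecs L"
    thus "f (lbr L x y) = lbr L' (f x) (f y)" by (rule br)
  qed
qed


lemma biso_intro:
  assumes bL: "bij_betw eL S {..<ldim L}"
    and iR: "inj_on eR S" and rR: "\<And>a. a \<in> S \<Longrightarrow> eR a < ldim L"
    and dd: "ldim L = ldim L'" "lgen L = lgen L'"
    and gen: "\<And>a. a \<in> S \<Longrightarrow> (eR a < lgen L \<longleftrightarrow> eL a < lgen L)"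
    and sg: "\<And>a. a \<in> S \<Longrightarrow> sg a \<noteq> 0"
    and eq: "\<And>a b c. a \<in> S \<Longrightarrow> b \<in> S \<Longrightarrow> c \<in> S \<Longrightarrow>
               sg a * sg b * lsc L' (eR a) (eR b) (eR c) = sg c * lsc L (eL a) (eL b) (eL c)"
  shows "biso L L'"
proof -
  define g where "g = the_inv_into S eL"
  have gb: "bij_betw g {..<ldim L} S" unfolding g_def by (rule bij_betw_the_inv_into[OF bL])
  have gS: "i < ldim L \<Longrightarrow> g i \<in> S" for i using gb by (auto dest: bij_betw_apply)
  have eg: "i < ldim L \<Longrightarrow> eL (g i) = i" for i
    unfolding g_def using bL by (metis bij_betw_def f_the_inv_into_f lessThan_iff)
  have inj: "inj_on (eR \<circ> g) {..<ldim L}"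
    using gb iR by (intro comp_inj_on) (auto simp: bij_betw_def)
  show ?thesis unfolding biso_def
  proof (intro conjI exI[of _ "eR \<circ> g"] exI[of _ "sg \<circ> g"] inj allI impI)
    fix i j k assume "i < ldim L" "j < ldim L" "k < ldim L"
    thus "(sg \<circ> g) i * (sg \<circ> g) j * lsc L' ((eR \<circ> g) i) ((eR \<circ> g) j) ((eR \<circ> g) k) =
          (sg \<circ> g) k * lsc L i j k"
      using eq[OF gS gS gS] eg by simp
  qed (use dd gS rR gen eg sg in auto)
qed


fun swp :: "pidx \<Rightarrow> pidx" where
  "swp (P1 i) = P2 i" | "swp (P2 j) = P1 j" | "swp (PZ a b) = PZ b a" | "swp PNone = PNone"

fun sgc :: "pidx \<Rightarrow> complex" where
  "sgc (PZ a b) = -1" | "sgc _ = 1"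

lemma swp_swp[simp]: "swp (swp l) = l" by (cases l) auto

lemma biso_comm:
  assumes wA: "wfL A" and wB: "wfL B"
  shows "biso (gprod A B) (gprod B A)"
proof (rule biso_intro[where S="{l. pvalid A B l}" and eL="penc A B" and eR="penc B A \<circ> swp" and sg=sgc])
  have vs: "pvalid A B l \<Longrightarrow> pvalid B A (swp l)" for l by (cases l) auto
  show "bij_betw (penc A B) {l. pvalid A B l} {..<ldim (gprod A B)}" by (rule enc_bij[OF wA wB])
  show "inj_on (penc B A \<circ> swp) {l. pvalid A B l}"
  proof (rule inj_onI)
    fix x y assume "x \<in> {l. pvalid A B l}" "y \<in> {l. pvalid A B l}" "(penc B A \<circ> swp) x = (penc B A \<circ> swp) y"
    hence "pdecode B A (penc B A (swp x)) = pdecode B A (penc B A (swp y))" by simp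
    hence "swp x = swp y" using vs dec_enc[OF wB wA] \<open>x \<in> _\<close> \<open>y \<in> _\<close> by simp
    thus "x = y" by (metis swp_swp)
  qed
  show "(penc B A \<circ> swp) a < ldim (gprod A B)" if "a \<in> {l. pvalid A B l}" for a
    using enc_lt[OF wB wA vs] that by (simp add: ac_simps)
  show "ldim (gprod A B) = ldim (gprod B A)" by simp
  show "lgen (gprod A B) = lgen (gprod B A)" by simp
  show "((penc B A \<circ> swp) a < lgen (gprod A B)) = (penc A B a < lgen (gprod A B))" if "a \<in> {l. pvalid A B l}" for a
  proof -
    have "pisgen B A (swp a) = pisgen A B a" by (cases a) auto
    thus ?thesis using enc_gen[OF wB wA vs, of a] enc_gen[OF wA wB, of a] that by (simp add: ac_simps)
  qed
  show "sgc a \<noteq> 0" for a by (cases a) auto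
  show "sgc a * sgc b * lsc (gprod B A) ((penc B A \<circ> swp) a) ((penc B A \<circ> swp) b) ((penc B A \<circ> swp) c) =
        sgc c * lsc (gprod A B) (penc A B a) (penc A B b) (penc A B c)"
    if "a \<in> {l. pvalid A B l}" "b \<in> {l. pvalid A B l}" "c \<in> {l. pvalid A B l}" for a b c
    using that
    apply (simp add: lsc_enc[OF wA wB] lsc_enc[OF wB wA] vs)
    by (cases a; cases b; cases c) (auto simp: pc_def)
qed


fun cmap :: "(nat \<Rightarrow> nat) \<Rightarrow> pidx \<Rightarrow> pidx" where
  "cmap p (P1 i) = P1 (p i)" | "cmap p (P2 j) = P2 j" | "cmap p (PZ a b) = PZ (p a) b" | "cmap p PNone = PNone"

fun csg :: "(nat \<Rightarrow> complex) \<Rightarrow> pidx \<Rightarrow> complex" where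
  "csg s (P1 i) = s i" | "csg s (P2 j) = 1" | "csg s (PZ a b) = s a" | "csg s PNone = 1"

lemma biso_cong_left:
  assumes wA: "wfL A" and wB: "wfL B" and bi: "biso A A'"
  shows "biso (gprod A B) (gprod A' B)"
proof -
  from bi obtain p s where d: "ldim A = ldim A'" "lgen A = lgen A'"
    and p: "inj_on p {..<ldim A}"
    "\<forall>i<ldim A. p i < ldim A \<and> (p i < lgen A \<longleftrightarrow> i < lgen A) \<and> s i \<noteq> 0"
    and eq: "\<forall>i<ldim A. \<forall>j<ldim A. \<forall>k<ldim A. s i * s j * lsc A' (p i) (p j) (p k) = s k * lsc A i j k"
    unfolding biso_def by blast
  have wA': "wfL A'" using wA d by (simp add: wfL_def)
  have pe: "penc A' B = penc A B" proof
    fix x show "penc A' B x = penc A B x" using d by (cases x) auto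
  qed
  have pinj: "a < ldim A \<Longrightarrow> i < ldim A \<Longrightarrow> p a = p i \<longleftrightarrow> a = i" for a i
    using p(1) by (auto dest: inj_onD)
  have plt: "i < ldim A \<Longrightarrow> p i < ldim A" "i < ldim A \<Longrightarrow> p i < lgen A \<longleftrightarrow> i < lgen A"
     "i < ldim A \<Longrightarrow> s i \<noteq> 0" for i using p(2) by auto
  have ln: "i < lgen A \<Longrightarrow> i < ldim A" for i using wA by (simp add: wfL_def)
  have vs: "pvalid A B l \<Longrightarrow> pvalid A' B (cmap p l)" for l using d plt ln by (cases l) auto
  show ?thesis
  proof (rule biso_intro[where S="{l. pvalid A B l}" and eL="penc A B" and eR="penc A' B \<circ> cmap p" and sg="csg s"])
    show "bij_betw (penc A B) {l. pvalid A B l} {..<ldim (gprod A B)}" by (rule enc_bij[OF wA wB])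
    show "inj_on (penc A' B \<circ> cmap p) {l. pvalid A B l}"
    proof (rule inj_onI)
      fix x y assume xy: "x \<in> {l. pvalid A B l}" "y \<in> {l. pvalid A B l}" "(penc A' B \<circ> cmap p) x = (penc A' B \<circ> cmap p) y"
      hence "pdecode A' B (penc A' B (cmap p x)) = pdecode A' B (penc A' B (cmap p y))" by simp
      hence "cmap p x = cmap p y" using vs[of x] vs[of y] dec_enc[OF wA' wB] xy(1,2) by (simp del: penc.simps)
      thus "x = y" using xy pinj ln by (cases x; cases y) auto
    qed
    show "(penc A' B \<circ> cmap p) a < ldim (gprod A B)" if "a \<in> {l. pvalid A B l}" for a
      using enc_lt[OF wA' wB vs] that d by simp
    show "ldim (gprod A B) = ldim (gprod A' B)" using d by simp
    show "lgen (gprod A B) = lgen (gprod A' B)" using d by simp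
    show "((penc A' B \<circ> cmap p) a < lgen (gprod A B)) = (penc A B a < lgen (gprod A B))" if "a \<in> {l. pvalid A B l}" for a
    proof -
      have "pisgen A' B (cmap p a) = pisgen A B a" using that plt d by (cases a) auto
      thus ?thesis using enc_gen[OF wA' wB vs, of a] enc_gen[OF wA wB, of a] that d by simp
    qed
    show "csg s a \<noteq> 0" if "a \<in> {l. pvalid A B l}" for a using that plt ln by (cases a) auto
    show "csg s a * csg s b * lsc (gprod A' B) ((penc A' B \<circ> cmap p) a) ((penc A' B \<circ> cmap p) b) ((penc A' B \<circ> cmap p) c) =
          csg s c * lsc (gprod A B) (penc A B a) (penc A B b) (penc A B c)"
      if "a \<in> {l. pvalid A B l}" "b \<in> {l. pvalid A B l}" "c \<in> {l. pvalid A B l}" for a b c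
      using that
      apply (simp add: lsc_enc[OF wA' wB] lsc_enc[OF wA wB] vs del: penc.simps)
      apply (cases a; cases b; cases c)
      using eq pinj plt ln d by (auto simp: pc_def)
  qed
qed


lemma enc_inj:
  assumes "wfL L1" "wfL L2" "pvalid L1 L2 l" "pvalid L1 L2 l'"
  shows "(penc L1 L2 l = penc L1 L2 l') = (l = l')"
  using dec_enc[OF assms(1,2,3)] dec_enc[OF assms(1,2,4)] by metis

lemma assoc_cases:
  assumes wA: "wfL A" and wB: "wfL B" and v: "pvalid (gprod A B) C l"
  shows "(\<exists>i. i < ldim A \<and> l = P1 (penc A B (P1 i))) \<or> (\<exists>j. j < ldim B \<and> l = P1 (penc A B (P2 j)))
    \<or> (\<exists>i j. i < lgen A \<and> j < lgen B \<and> l = P1 (penc A B (PZ i j))) \<or> (\<exists>k. k < ldim C \<and> l = P2 k)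
    \<or> (\<exists>i k. i < lgen A \<and> k < lgen C \<and> l = PZ (penc A B (P1 i)) k)
    \<or> (\<exists>j k. j < lgen B \<and> k < lgen C \<and> l = PZ (penc A B (P2 j)) k)"
proof (cases l)
  case (P1 q)
  hence q: "q < ldim (gprod A B)" using v by simp
  define m where "m = pdecode A B q"
  have m: "pvalid A B m" "q = penc A B m" using dec_valid[OF wA wB q] m_def by auto
  show ?thesis using m P1 by (cases m) auto
next
  case (PZ q k)
  hence q: "q < lgen A + lgen B" "k < lgen C" using v by auto
  hence q': "q < ldim (gprod A B)" using wA wB by (simp add: wfL_def)
  define m where "m = pdecode A B q"
  have m: "pvalid A B m" "q = penc A B m" using dec_valid[OF wA wB q'] m_def by auto
  have "pisgen A B m" using enc_gen[OF wA wB m(1)] m(2) q(1) by simp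
  show ?thesis using m PZ q \<open>pisgen A B m\<close> by (cases m) auto
qed (use v in auto)

fun amap :: "liealg \<Rightarrow> liealg \<Rightarrow> liealg \<Rightarrow> pidx \<Rightarrow> pidx" where
  "amap A B C (P1 q) = (case pdecode A B q of P1 i \<Rightarrow> P1 i | P2 j \<Rightarrow> P2 (penc B C (P1 j))
      | PZ i j \<Rightarrow> PZ i (penc B C (P1 j)) | PNone \<Rightarrow> PNone)"
| "amap A B C (P2 k) = P2 (penc B C (P2 k))"
| "amap A B C (PZ q k) = (case pdecode A B q of P1 i \<Rightarrow> PZ i (penc B C (P2 k))
      | P2 j \<Rightarrow> P2 (penc B C (PZ j k)) | _ \<Rightarrow> PNone)"
| "amap A B C PNone = PNone"

lemma biso_assoc:
  assumes wA: "wfL A" and wB: "wfL B" and wC: "wfL C"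
  shows "biso (gprod (gprod A B) C) (gprod A (gprod B C))"
proof -
  have wAB: "wfL (gprod A B)" and wBC: "wfL (gprod B C)" using wA wB wC by (simp_all add: wfL_gprod)
  note cs = assoc_cases[OF wA wB]
  note ss = dec_enc[OF wA wB] enc_gen[OF wA wB] enc_gen[OF wB wC] enc_inj[OF wA wB] enc_inj[OF wB wC]
     enc_lt[OF wB wC] enc_lt[OF wA wB]
  have lA: "i < lgen A \<Longrightarrow> i < ldim A" "j < lgen B \<Longrightarrow> j < ldim B" "k < lgen C \<Longrightarrow> k < ldim C" for i j k
    using wA wB wC by (auto simp: wfL_def)
  have vs: "pvalid A (gprod B C) (amap A B C l)" if "pvalid (gprod A B) C l" for l
    using cs[OF that] lA by (elim disjE exE conjE) (simp_all add: ss del: penc.simps ldim_gprod)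
  show ?thesis
  proof (rule biso_intro[where S="{l. pvalid (gprod A B) C l}" and eL="penc (gprod A B) C"
        and eR="penc A (gprod B C) \<circ> amap A B C" and sg="\<lambda>_. 1"])
    show "bij_betw (penc (gprod A B) C) {l. pvalid (gprod A B) C l} {..<ldim (gprod (gprod A B) C)}"
      by (rule enc_bij[OF wAB wC])
    show "inj_on (penc A (gprod B C) \<circ> amap A B C) {l. pvalid (gprod A B) C l}"
    proof (rule inj_onI)
      fix x y assume xy: "x \<in> {l. pvalid (gprod A B) C l}" "y \<in> {l. pvalid (gprod A B) C l}"
        "(penc A (gprod B C) \<circ> amap A B C) x = (penc A (gprod B C) \<circ> amap A B C) y"
      hence e: "amap A B C x = amap A B C y" using enc_inj[OF wA wBC vs vs] by simp
      show "x = y" using cs[OF xy(1)[simplified]] cs[OF xy(2)[simplified]] e lA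
        by (elim disjE exE conjE) (simp_all add: ss del: penc.simps ldim_gprod)
    qed
    show dim: "ldim (gprod (gprod A B) C) = ldim (gprod A (gprod B C))" by (simp add: algebra_simps)
    show "(penc A (gprod B C) \<circ> amap A B C) a < ldim (gprod (gprod A B) C)"
      if "a \<in> {l. pvalid (gprod A B) C l}" for a
      using enc_lt[OF wA wBC vs[OF that[simplified]]] dim by (simp only: o_apply)
    show "lgen (gprod (gprod A B) C) = lgen (gprod A (gprod B C))" by simp
    show "((penc A (gprod B C) \<circ> amap A B C) a < lgen (gprod (gprod A B) C)) =
          (penc (gprod A B) C a < lgen (gprod (gprod A B) C))" if "a \<in> {l. pvalid (gprod A B) C l}" for a
    proof -
      have "pisgen A (gprod B C) (amap A B C a) = pisgen (gprod A B) C a"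
        using cs[OF that[simplified]] lA by (elim disjE exE conjE) (simp_all add: ss del: penc.simps ldim_gprod)
      thus ?thesis using enc_gen[OF wA wBC vs, of a] enc_gen[OF wAB wC, of a] that by (simp add: add.assoc)
    qed
    show "(1::complex) \<noteq> 0" by simp
    show "1 * 1 * lsc (gprod A (gprod B C)) ((penc A (gprod B C) \<circ> amap A B C) a)
           ((penc A (gprod B C) \<circ> amap A B C) b) ((penc A (gprod B C) \<circ> amap A B C) c) =
          1 * lsc (gprod (gprod A B) C) (penc (gprod A B) C a) (penc (gprod A B) C b) (penc (gprod A B) C c)"
      if "a \<in> {l. pvalid (gprod A B) C l}" "b \<in> {l. pvalid (gprod A B) C l}" "c \<in> {l. pvalid (gprod A B) C l}" for a b c
    proof -
      have "pc A (gprod B C) (amap A B C a) (amap A B C b) (amap A B C c) = pc (gprod A B) C a b c"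
        using cs[OF that(1)[simplified]] cs[OF that(2)[simplified]] cs[OF that(3)[simplified]] lA
        by (elim disjE exE conjE)
           (simp_all add: ss pc_def lsc_enc[OF wA wB] lsc_enc[OF wB wC] del: penc.simps ldim_gprod)
      thus ?thesis using that vs lsc_enc[OF wA wBC] lsc_enc[OF wAB wC] by simp
    qed
  qed
qed


lemma iprod_snoc: "xs \<noteq> [] \<Longrightarrow> iprod (xs @ [x]) = gprod (iprod xs) x"
  by (cases xs) (simp_all add: iprod_def)

lemma wfL_iprod: "xs \<noteq> [] \<Longrightarrow> \<forall>g\<in>set xs. wfL g \<Longrightarrow> wfL (iprod xs)"
proof (induction xs rule: rev_induct)
  case (snoc x xs) thus ?case
    by (cases "xs = []") (simp_all add: iprod_def iprod_snoc wfL_gprod)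
qed simp

lemma assoc_list:
  "\<forall>g\<in>set (g1 # g2 # rs). wfL g \<Longrightarrow> biso (iprod (g1 # g2 # rs)) (gprod g1 (iprod (g2 # rs)))"
proof (induction rs rule: rev_induct)
  case Nil thus ?case by (simp add: iprod_def biso_refl)
next
  case (snoc h rs)
  have w: "\<forall>g\<in>set (g1 # g2 # rs). wfL g" "wfL h" "wfL g1" using snoc.prems by auto
  have w1: "wfL (iprod (g1 # g2 # rs))" "wfL (iprod (g2 # rs))"
    using w by (auto intro!: wfL_iprod)
  have "iprod (g1 # g2 # rs @ [h]) = gprod (iprod (g1 # g2 # rs)) h"
    using iprod_snoc[of "g1 # g2 # rs" h] by simp
  moreover have "iprod (g2 # rs @ [h]) = gprod (iprod (g2 # rs)) h"
    using iprod_snoc[of "g2 # rs" h] by simp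
  moreover have "biso (gprod (iprod (g1 # g2 # rs)) h) (gprod (gprod g1 (iprod (g2 # rs))) h)"
    using biso_cong_left[OF w1(1) w(2) snoc.IH[OF w(1)]] .
  moreover have "biso (gprod (gprod g1 (iprod (g2 # rs))) h) (gprod g1 (gprod (iprod (g2 # rs)) h))"
    using biso_assoc[OF w(3) w1(2) w(2)] .
  ultimately show ?case by (metis biso_trans)
qed

theorem mainTheorem5:
  fixes gs :: "liealg list"
  assumes "length gs \<ge> 2"
    and "\<forall>g\<in>set gs. good_nilpotent g"
  shows "lie_iso (gprod (gs ! 0) (gs ! 1)) (gprod (gs ! 1) (gs ! 0))
       \<and> lie_iso (gprod (iprod (butlast gs)) (last gs)) (gprod (hd gs) (iprod (tl gs)))"
proof -
  have w: "\<forall>g\<in>set gs. wfL g" using assms(2)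
    by (auto simp: good_nilpotent_def adapted_basis_def wfL_def)
  obtain g1 g2 rs where gs: "gs = g1 # g2 # rs" using assms(1)
    by (metis One_nat_def Suc_1 Suc_le_length_iff)
  have w12: "wfL g1" "wfL g2" using w gs by auto
  have "gprod (iprod (butlast gs)) (last gs) = iprod gs"
  proof -
    have ne: "butlast gs \<noteq> []" using gs by simp
    have "gs = butlast gs @ [last gs]" using gs by simp
    thus ?thesis using iprod_snoc[OF ne, of "last gs"] by metis
  qed
  hence "biso (gprod (iprod (butlast gs)) (last gs)) (gprod (hd gs) (iprod (tl gs)))"
    using assoc_list[of g1 g2 rs] w gs by simp
  moreover have "biso (gprod (gs ! 0) (gs ! 1)) (gprod (gs ! 1) (gs ! 0))"
    using biso_comm[OF w12] gs by simp
  ultimately show ?thesis using biso_iso by blast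
qed

end
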